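(* For every real $\beta\ge 1$ and every integer $n>0$, $\sum_{i=0}^{n}\Big(2^{i}\beta^{2^i}\prod_{j=i}^{n}(1-2^j)\Big)<0.$ *)

theory Defs
  imports Complex_Main
begin

end

theory Submission
  imports Defs
begin

fun F :: "nat \<Rightarrow> real \<Rightarrow> real" where
  "F 0 y = y"
| "F (Suc n) y = 2^(n+1) * y^(2^(n+1)) - (2^(n+1) - 1) * F n y"

fun F' :: "nat \<Rightarrow> real \<Rightarrow> real" where
  "F' 0 y = 1"
| "F' (Suc n) y = 2^(n+1) * (2^(n+1) * y^(2^(n+1) - 1)) - (2^(n+1) - 1) * F' n y"

lemma F_deriv: "(F n has_real_derivative F' n y) (at y)"
proof (induction n)
  case 0 then show ?case by (auto intro!: derivative_eq_intros)
next
  case (Suc n)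
  have "((\<lambda>y. y^(2^(n+1))) has_real_derivative (of_nat (2^(n+1)) * y^(2^(n+1) - 1))) (at y)"
    using DERIV_pow[of "2^(n+1)" y] by simp
  then have "((\<lambda>y. 2^(n+1) * y^(2^(n+1)) - (2^(n+1) - 1) * F n y) has_real_derivative
      2^(n+1) * (of_nat (2^(n+1)) * y^(2^(n+1) - 1)) - (2^(n+1) - 1) * F' n y) (at y)"
    using Suc by (intro DERIV_diff DERIV_cmult) auto
  then show ?case by simp
qed

lemma pow_pred: "(y::real) * y^(2^k - 1) = y^(2^k)"
proof -
  have "(2::nat)^k \<ge> 1" by simp
  then have "Suc (2^k - 1) = 2^k" by simp
  then show ?thesis by (metis power_Suc)
qed

lemma F_ident: "y * F' (Suc n) y - F (Suc n) y = 2 * (2^(n+1) - 1) * F n (y^2)"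
proof (induction n)
  case 0
  then show ?case by (simp add: power2_eq_square algebra_simps)
next
  case (Suc n)
  have e: "(y^2)^(2^(n+1)) = y^(2^(n+2))"
    by (simp add: power_mult[symmetric] power_Suc)
  have "y * F' (Suc (Suc n)) y - F (Suc (Suc n)) y =
     2^(n+2) * (2^(n+2) * (y * y^(2^(n+2) - 1))) - 2^(n+2) * y^(2^(n+2))
       - (2^(n+2) - 1) * (y * F' (Suc n) y - F (Suc n) y)"
    by (simp add: algebra_simps)
  also have "\<dots> = 2^(n+2) * (2^(n+2) - 1) * y^(2^(n+2))
       - (2^(n+2) - 1) * (2 * (2^(n+1) - 1) * F n (y^2))"
    using Suc by (simp only: pow_pred) (simp add: algebra_simps)
  also have "\<dots> = 2 * (2^(n+2) - 1) * F (Suc n) (y^2)"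
    by (simp only: F.simps e) (simp add: algebra_simps)
  finally show ?case by simp
qed

lemma F_one: "F n 1 = 1"
  by (induction n) (simp_all add: algebra_simps)

lemma F_pos: "y \<ge> 1 \<Longrightarrow> F n y > 0"
proof (induction n arbitrary: y)
  case 0 then show ?case by simp
next
  case (Suc n)
  show ?case
  proof (cases "y = 1")
    case True then show ?thesis by (simp add: F_one del: F.simps)
  next
    case False
    with Suc.prems have lt: "1 < y" by simp
    have "(\<lambda>z. F (Suc n) z / z) 1 < (\<lambda>z. F (Suc n) z / z) y"
    proof (rule DERIV_pos_imp_increasing[OF lt])
      fix x :: real assume x: "1 \<le> x" "x \<le> y"
      have d: "((\<lambda>z. F (Suc n) z / z) has_real_derivative
          (F' (Suc n) x * x - F (Suc n) x * 1) / (x * x)) (at x)"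
        using x by (intro DERIV_divide F_deriv DERIV_ident) auto
      have "F n (x^2) > 0" using Suc.IH[of "x^2"] x by (simp add: one_le_power)
      moreover have "(2::real)^(n+1) - 1 > 0"
        by (metis diff_gt_0_iff_gt less_1_mult one_less_numeral_iff power_Suc semiring_norm(76) Suc_eq_plus1 one_less_power zero_less_Suc)
      ultimately have "2 * (2^(n+1) - 1) * F n (x^2) > 0" by simp
      moreover have "F' (Suc n) x * x - F (Suc n) x * 1 = 2 * (2^(n+1) - 1) * F n (x^2)"
        using F_ident[of x n] by (simp only: mult.commute[of "F' (Suc n) x" x] mult_1_right)
      ultimately have "(F' (Suc n) x * x - F (Suc n) x * 1) / (x * x) > 0"
        using x by simp
      with d show "\<exists>d. ((\<lambda>z. F (Suc n) z / z) has_real_derivative d) (at x) \<and> d > 0"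
        by auto
    qed
    then have "F (Suc n) y / y > 1" by (simp add: F_one del: F.simps)
    then show ?thesis using lt by (smt (verit) divide_nonpos_pos)
  qed
qed

definition S :: "nat \<Rightarrow> real \<Rightarrow> real" where
  "S n b = (\<Sum>i=0..n. 2 ^ i * b ^ (2 ^ i) * (\<Prod>j=i..n. (1 - 2 ^ j :: real)))"

lemma S_rec: "S (Suc n) b = (1 - 2^(Suc n)) * (S n b + 2^(Suc n) * b^(2^(Suc n)))"
proof -
  have "S (Suc n) b = (\<Sum>i=0..n. 2 ^ i * b ^ (2 ^ i) * (\<Prod>j=i..Suc n. (1 - 2 ^ j :: real)))
      + 2^(Suc n) * b^(2^(Suc n)) * (1 - 2^(Suc n))"
    unfolding S_def by (simp add: sum.atLeast0_atMost_Suc)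
  also have "(\<Sum>i=0..n. 2 ^ i * b ^ (2 ^ i) * (\<Prod>j=i..Suc n. (1 - 2 ^ j :: real)))
     = (\<Sum>i=0..n. 2 ^ i * b ^ (2 ^ i) * (\<Prod>j=i..n. (1 - 2 ^ j :: real)) * (1 - 2^(Suc n)))"
    by (intro sum.cong refl) (simp add: prod.nat_ivl_Suc')
  also have "\<dots> = S n b * (1 - 2^(Suc n))"
    unfolding S_def by (simp add: sum_distrib_right)
  finally show ?thesis by (simp add: algebra_simps)
qed

lemma S_F: "S (Suc m) b = - 2 * (2^(m+1) - 1) * F m (b^2)"
proof (induction m)
  case 0
  show ?case by (simp add: S_rec) (simp add: S_def power2_eq_square)
next
  case (Suc m)
  have e: "(b^2)^(2^(m+1)) = b^(2^(m+2))"
    by (simp add: power_mult[symmetric] power_Suc)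
  show ?case
    by (subst S_rec, subst Suc) (simp only: F.simps e, simp add: algebra_simps)
qed

theorem lemma4:
  fixes \<beta> :: real and n :: nat
  assumes "\<beta> \<ge> 1" and "n > 0"
  shows "(\<Sum>i=0..n. 2 ^ i * \<beta> ^ (2 ^ i) * (\<Prod>j=i..n. (1 - 2 ^ j :: real))) < 0"
proof -
  obtain m where n: "n = Suc m" using assms(2) gr0_implies_Suc by blast
  have "F m (\<beta>^2) > 0" using assms(1) by (intro F_pos) (simp add: one_le_power)
  moreover have "(2::real)^(m+1) - 1 > 0"
    using one_less_power[of "2::real" "m+1"] by simp
  ultimately have "(2^(m+1) - 1) * F m (\<beta>^2) > 0" by simp
  then have "S n \<beta> < 0" unfolding n S_F by linarith
  then show ?thesis by (simp add: S_def)
qed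

end
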